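(* Let $k\ge2$, let $r_1,\dots,r_k$ be positive integers and let $a\le b$ be positive integers. Then \[ N_k(r_1,\dots,r_k;a)\,N_k(r_1,\dots,r_k;b)\le N_k^{(1)}(r_1,\dots,r_k;a,b)\,N_k^{(1)}(r_1,\dots,r_k;b,a). \]
   Context: $K(r_1,\dots,r_k)$ is the complete $k$-partite graph with parts $V_1,\dots,V_k$ of sizes $r_1,\dots,r_k$. $N_k(r_1,\dots,r_k;c)$ is the number of proper colourings of $K(r_1,\dots,r_k)$ with colours from a set of size $c$. Fix sets $A\subseteq B$ with $|A|=a$, $|B|=b$. $N_k^{(1)}(r_1,\dots,r_k;a,b)$ is the number of proper colourings of $K(r_1,\dots,r_k)$ in which $V_1$ receives colours from $A$ and $V_2,\dots,V_k$ receive colours from $B$; $N_k^{(1)}(r_1,\dots,r_k;b,a)$ is the number of proper colourings in which $V_1$ receives colours from $B$ and $V_2,\dots,V_k$ receive colours from $A$. *)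

theory Defs
  imports "HOL-Library.FuncSet"
begin

text \<open>The complete k-partite graph K(r_1,...,r_k): vertices are pairs (i,j) with
  i < k (part index; part i corresponds to V_(i+1)) and j < r i. Two vertices are
  adjacent iff they lie in different parts.\<close>

definition kp_vertices :: "nat \<Rightarrow> (nat \<Rightarrow> nat) \<Rightarrow> (nat \<times> nat) set" where
  "kp_vertices k r = {(i, j). i < k \<and> j < r i}"

definition kp_colourings ::
  "nat \<Rightarrow> (nat \<Rightarrow> nat) \<Rightarrow> (nat \<Rightarrow> 'c set) \<Rightarrow> ((nat \<times> nat) \<Rightarrow> 'c) set" where
  "kp_colourings k r C =
     {f \<in> kp_vertices k r \<rightarrow>\<^sub>E (\<Union>i<k. C i).
        (\<forall>v \<in> kp_vertices k r. f v \<in> C (fst v)) \<and>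
        (\<forall>v \<in> kp_vertices k r. \<forall>w \<in> kp_vertices k r. fst v \<noteq> fst w \<longrightarrow> f v \<noteq> f w)}"

definition N_k :: "nat \<Rightarrow> (nat \<Rightarrow> nat) \<Rightarrow> nat \<Rightarrow> nat" where
  "N_k k r c = card (kp_colourings k r (\<lambda>_. {0..<c}))"

definition N1_k :: "nat \<Rightarrow> (nat \<Rightarrow> nat) \<Rightarrow> 'c set \<Rightarrow> 'c set \<Rightarrow> nat" where
  "N1_k k r X Y = card (kp_colourings k r (\<lambda>i. if i = 0 then X else Y))"

end

theory Submission
  imports Defs Complex_Main
begin

definition ff :: "nat \<Rightarrow> nat \<Rightarrow> nat" where
  "ff c n = prod ((-) c) {0..<n}"

lemma ff_0[simp]: "ff c 0 = 1" by (simp add: ff_def)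

lemma ff_Suc: "ff c (Suc n) = ff c n * (c - n)"
  by (simp add: ff_def)

lemma ff_add: "ff c (m + n) = ff c m * ff (c - m) n"
  by (induction n; simp add: ff_Suc diff_diff_left)

lemma ff_eq_0_iff: "ff c n = 0 \<longleftrightarrow> c < n"
  by (auto simp: ff_def)

lemma ff_mono: "c \<le> c' \<Longrightarrow> ff c n \<le> ff c' n"
  unfolding ff_def by (intro prod_mono) auto

lemma ff_key:
  assumes "a \<le> b"
  shows "ff (a - x) y * ff b y \<le> ff a y * ff (b - x) y"
proof -
  have "ff (a - x) y * ff b y = (\<Prod>i\<in>{0..<y}. (a - x - i) * (b - i))"
    by (simp add: ff_def prod.distrib)
  also have "\<dots> \<le> (\<Prod>i\<in>{0..<y}. (a - i) * (b - x - i))"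
  proof (intro prod_mono conjI)
    fix i
    show "(a - x - i) * (b - i) \<le> (a - i) * (b - x - i)"
    proof (cases "x + i < a")
      case True
      then obtain c where c: "a = x + i + c" "0 < c" by (metis less_imp_add_positive)
      from assms c obtain e where e: "b = a + e" by (metis le_iff_add)
      show ?thesis using c e by (simp add: algebra_simps)
    next
      case False
      then show ?thesis by simp
    qed
  qed simp
  also have "\<dots> = ff a y * ff (b - x) y"
    by (simp add: ff_def prod.distrib)
  finally show ?thesis .
qed

lemma ff_logconc:
  assumes "x' \<le> x" "y' \<le> y"
  shows "ff b (x + y) * ff b (x' + y') \<le> ff b (x + y') * ff b (x' + y)"
proof -
  have 1: "ff b (x + y) = ff b (x + y') * ff (b - (x + y')) (y - y')"
    using ff_add[of b "x + y'" "y - y'"] assms by simp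
  have 2: "ff b (x' + y) = ff b (x' + y') * ff (b - (x' + y')) (y - y')"
    using ff_add[of b "x' + y'" "y - y'"] assms by simp
  have 3: "ff (b - (x + y')) (y - y') \<le> ff (b - (x' + y')) (y - y')"
    using assms by (intro ff_mono) simp
  show ?thesis unfolding 1 2
    using mult_left_mono[OF 3, of "ff b (x + y') * ff b (x' + y')"]
    by (simp add: mult_ac)
qed

definition hh :: "nat \<Rightarrow> nat \<Rightarrow> nat \<Rightarrow> real" where
  "hh a b n = real (ff a n) / real (ff b n)"

lemma hh_nonneg: "0 \<le> hh a b n"
  by (simp add: hh_def)

lemma hh_Suc:
  assumes "a \<le> b"
  shows "hh a b (Suc n) \<le> hh a b n"
proof (cases "b \<le> n")
  case True
  then have "ff b (Suc n) = 0" by (simp add: ff_eq_0_iff)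
  then show ?thesis by (simp add: hh_def)
next
  case False
  then have "ff b n \<noteq> 0" by (simp add: ff_eq_0_iff)
  then have pos: "0 < ff b n" by simp
  have bn: "0 < b - n" using False by simp
  have "hh a b (Suc n) = hh a b n * (real (a - n) / real (b - n))"
    by (simp add: hh_def ff_Suc)
  also have "\<dots> \<le> hh a b n * 1"
    using bn assms by (intro mult_left_mono hh_nonneg) (simp_all add: divide_le_eq_1)
  finally show ?thesis by simp
qed

lemma hh_antimono:
  assumes "a \<le> b" "n \<le> n'"
  shows "hh a b n' \<le> hh a b n"
  using lift_Suc_antimono_le[of "hh a b", OF hh_Suc[OF assms(1)] assms(2)] .

lemma F2:
  assumes "a \<le> b"
  shows "real (ff a x * ff (b - x) y) = hh a b x * real (ff b (x + y))"
proof (cases "ff b x = 0")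
  case True
  then have "ff a x = 0" using assms by (simp add: ff_eq_0_iff)
  then show ?thesis using True by (simp add: hh_def)
next
  case False
  then show ?thesis by (simp add: hh_def ff_add)
qed

lemma F3:
  assumes "a \<le> b"
  shows "real (ff a y * ff (b - y) x) = hh a b y * real (ff b (x + y))"
  using F2[OF assms, of y x] by (simp add: add.commute)

lemma F4:
  assumes "a \<le> b"
  shows "real (ff a x * ff (a - x) y) \<le> hh a b x * hh a b y * real (ff b (x + y))"
proof (cases "ff b x = 0 \<or> ff b y = 0")
  case True
  then have "ff a x * ff (a - x) y = 0" using assms by (auto simp: ff_eq_0_iff)
  then have "real (ff a x * ff (a - x) y) = 0" by simp
  moreover have "0 \<le> hh a b x * hh a b y * real (ff b (x + y))"
    by (intro mult_nonneg_nonneg hh_nonneg) simp_all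
  ultimately show ?thesis by linarith
next
  case False
  then have px: "0 < real (ff b x)" and py: "0 < real (ff b y)" by auto
  have key: "real (ff (a - x) y) * real (ff b y) \<le> real (ff a y) * real (ff (b - x) y)"
    using ff_key[OF assms, of x y] by (metis of_nat_le_iff of_nat_mult)
  have "real (ff a x * ff (a - x) y) = real (ff a x) * real (ff (a - x) y)" by simp
  also have "\<dots> \<le> real (ff a x) * (real (ff a y) * real (ff (b - x) y) / real (ff b y))"
    using key py by (intro mult_left_mono) (simp_all add: pos_le_divide_eq)
  also have "\<dots> = hh a b x * hh a b y * real (ff b (x + y))"
    using px py by (simp add: hh_def ff_add field_simps)
  finally show ?thesis .
qed

lemma pointwise:
  assumes "a \<le> b"
  shows "0 \<le> (hh a b X - hh a b X') * (hh a b Y - hh a b Y') *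
     (real (ff b (X + Y')) * real (ff b (X' + Y)) - real (ff b (X + Y)) * real (ff b (X' + Y')))"
proof -
  let ?h = "hh a b"
  let ?m = "\<lambda>n. real (ff b n)"
  have lc: "?m (x + y) * ?m (x' + y') \<le> ?m (x + y') * ?m (x' + y)" if "x' \<le> x" "y' \<le> y" for x x' y y'
    using ff_logconc[OF that, of b] by (metis of_nat_le_iff of_nat_mult)
  consider "X' \<le> X" "Y' \<le> Y" | "X' \<le> X" "Y \<le> Y'" | "X \<le> X'" "Y' \<le> Y" | "X \<le> X'" "Y \<le> Y'"
    by linarith
  then show ?thesis
  proof cases
    case 1
    have "?h X \<le> ?h X'" "?h Y \<le> ?h Y'" using 1 hh_antimono[OF assms] by auto
    moreover have "?m (X + Y) * ?m (X' + Y') \<le> ?m (X + Y') * ?m (X' + Y)" using lc 1 by blast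
    ultimately show ?thesis
      by (intro mult_nonneg_nonneg mult_nonpos_nonpos) auto
  next
    case 2
    have "?h X \<le> ?h X'" "?h Y' \<le> ?h Y" using 2 hh_antimono[OF assms] by auto
    moreover have "?m (X + Y') * ?m (X' + Y) \<le> ?m (X + Y) * ?m (X' + Y')" using lc 2 by blast
    ultimately show ?thesis
      by (intro mult_nonpos_nonpos mult_nonpos_nonneg) auto
  next
    case 3
    have "?h X' \<le> ?h X" "?h Y \<le> ?h Y'" using 3 hh_antimono[OF assms] by auto
    moreover have "?m (X' + Y) * ?m (X + Y') \<le> ?m (X' + Y') * ?m (X + Y)" using lc 3 by blast
    ultimately show ?thesis
      by (intro mult_nonpos_nonpos mult_nonneg_nonpos) (auto simp: mult_ac)
  next
    case 4
    have "?h X' \<le> ?h X" "?h Y' \<le> ?h Y" using 4 hh_antimono[OF assms] by auto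
    moreover have "?m (X' + Y') * ?m (X + Y) \<le> ?m (X' + Y) * ?m (X + Y')" using lc 4 by blast
    ultimately show ?thesis
      by (intro mult_nonneg_nonneg) (auto simp: mult_ac)
  qed
qed

definition S4 :: "'p set \<Rightarrow> 'q set \<Rightarrow> ('p \<Rightarrow> 'q \<Rightarrow> 'p \<Rightarrow> 'q \<Rightarrow> real) \<Rightarrow> real" where
  "S4 P Q F = (\<Sum>p\<in>P. \<Sum>q\<in>Q. \<Sum>p'\<in>P. \<Sum>q'\<in>Q. F p q p' q')"

lemma S4_add: "S4 P Q (\<lambda>p q p' q'. F p q p' q' + G p q p' q') = S4 P Q F + S4 P Q G"
  by (simp add: S4_def sum.distrib)

lemma S4_diff: "S4 P Q (\<lambda>p q p' q'. F p q p' q' - G p q p' q') = S4 P Q F - S4 P Q G"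
  by (simp add: S4_def sum_subtractf)

lemma S4_nonneg: "(\<And>p q p' q'. 0 \<le> F p q p' q') \<Longrightarrow> 0 \<le> S4 P Q F"
  by (simp add: S4_def sum_nonneg)

lemma S4_swp: "S4 P Q F = S4 P Q (\<lambda>p q p' q'. F p' q p q')"
proof -
  have 1: "S4 P Q F = (\<Sum>p\<in>P. \<Sum>p'\<in>P. \<Sum>q\<in>Q. \<Sum>q'\<in>Q. F p q p' q')"
    unfolding S4_def by (rule sum.cong[OF refl], rule sum.swap)
  have 2: "S4 P Q (\<lambda>p q p' q'. F p' q p q') = (\<Sum>p\<in>P. \<Sum>p'\<in>P. \<Sum>q\<in>Q. \<Sum>q'\<in>Q. F p' q p q')"
    unfolding S4_def by (rule sum.cong[OF refl], rule sum.swap)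
  show ?thesis unfolding 1 2 by (rule sum.swap)
qed

lemma S4_swq: "S4 P Q F = S4 P Q (\<lambda>p q p' q'. F p q' p' q)"
proof -
  have 1: "S4 P Q F = (\<Sum>p\<in>P. \<Sum>p'\<in>P. \<Sum>q\<in>Q. \<Sum>q'\<in>Q. F p q p' q')"
    unfolding S4_def by (rule sum.cong[OF refl], rule sum.swap)
  have 2: "S4 P Q (\<lambda>p q p' q'. F p q' p' q) = (\<Sum>p\<in>P. \<Sum>p'\<in>P. \<Sum>q\<in>Q. \<Sum>q'\<in>Q. F p q' p' q)"
    unfolding S4_def by (rule sum.cong[OF refl], rule sum.swap)
  show ?thesis unfolding 1 2 by (intro sum.cong refl sum.swap)
qed

lemma S4_prod:
  "(\<Sum>p\<in>P. \<Sum>q\<in>Q. f p q) * (\<Sum>p\<in>P. \<Sum>q\<in>Q. g p q) = S4 P Q (\<lambda>p q p' q'. f p q * g p' q')"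
  by (simp add: S4_def sum_distrib_right) (simp add: sum_distrib_left)

lemma numeric_real:
  fixes P :: "'p set" and Q :: "'q set" and x :: "'p \<Rightarrow> nat" and y :: "'q \<Rightarrow> nat"
  assumes ab: "a \<le> b"
  shows "(\<Sum>p\<in>P. \<Sum>q\<in>Q. real (ff a (x p) * ff (a - x p) (y q))) * (\<Sum>p\<in>P. \<Sum>q\<in>Q. real (ff b (x p) * ff (b - x p) (y q)))
        \<le> (\<Sum>p\<in>P. \<Sum>q\<in>Q. real (ff a (x p) * ff (b - x p) (y q))) * (\<Sum>p\<in>P. \<Sum>q\<in>Q. real (ff a (y q) * ff (b - y q) (x p)))"
proof -
  let ?h = "hh a b"
  let ?m = "\<lambda>n. real (ff b n)"
  have L2: "(\<Sum>p\<in>P. \<Sum>q\<in>Q. real (ff b (x p) * ff (b - x p) (y q))) = (\<Sum>p\<in>P. \<Sum>q\<in>Q. ?m (x p + y q))"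
    by (simp add: ff_add)
  have L2nn: "0 \<le> (\<Sum>p\<in>P. \<Sum>q\<in>Q. ?m (x p + y q))" by (simp add: sum_nonneg)
  have L1: "(\<Sum>p\<in>P. \<Sum>q\<in>Q. real (ff a (x p) * ff (a - x p) (y q))) \<le> (\<Sum>p\<in>P. \<Sum>q\<in>Q. ?h (x p) * ?h (y q) * ?m (x p + y q))"
    by (intro sum_mono F4[OF ab])
  have R1: "(\<Sum>p\<in>P. \<Sum>q\<in>Q. real (ff a (x p) * ff (b - x p) (y q))) = (\<Sum>p\<in>P. \<Sum>q\<in>Q. ?h (x p) * ?m (x p + y q))"
    by (simp only: F2[OF ab])
  have R2: "(\<Sum>p\<in>P. \<Sum>q\<in>Q. real (ff a (y q) * ff (b - y q) (x p))) = (\<Sum>p\<in>P. \<Sum>q\<in>Q. ?h (y q) * ?m (x p + y q))"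
    by (simp only: F3[OF ab])
  define G where "G = (\<lambda>p q p' q'. ?h (x p) * ?h (y q) * (?m (x p + y q') * ?m (x p' + y q) - ?m (x p + y q) * ?m (x p' + y q')))"
  have main: "(\<Sum>p\<in>P. \<Sum>q\<in>Q. ?h (x p) * ?h (y q) * ?m (x p + y q)) * (\<Sum>p\<in>P. \<Sum>q\<in>Q. ?m (x p + y q))
     \<le> (\<Sum>p\<in>P. \<Sum>q\<in>Q. ?h (x p) * ?m (x p + y q)) * (\<Sum>p\<in>P. \<Sum>q\<in>Q. ?h (y q) * ?m (x p + y q))"
  proof -
    have e1: "(\<Sum>p\<in>P. \<Sum>q\<in>Q. ?h (x p) * ?m (x p + y q)) * (\<Sum>p\<in>P. \<Sum>q\<in>Q. ?h (y q) * ?m (x p + y q))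
      = S4 P Q (\<lambda>p q p' q'. ?h (x p) * ?m (x p + y q') * (?h (y q) * ?m (x p' + y q)))"
      by (subst S4_prod, subst S4_swq, simp)
    have e2: "(\<Sum>p\<in>P. \<Sum>q\<in>Q. ?h (x p) * ?h (y q) * ?m (x p + y q)) * (\<Sum>p\<in>P. \<Sum>q\<in>Q. ?m (x p + y q))
      = S4 P Q (\<lambda>p q p' q'. ?h (x p) * ?h (y q) * ?m (x p + y q) * ?m (x p' + y q'))"
      by (rule S4_prod)
    have e3: "S4 P Q (\<lambda>p q p' q'. ?h (x p) * ?m (x p + y q') * (?h (y q) * ?m (x p' + y q)))
       - S4 P Q (\<lambda>p q p' q'. ?h (x p) * ?h (y q) * ?m (x p + y q) * ?m (x p' + y q')) = S4 P Q G"
      unfolding S4_diff[symmetric] G_def by (simp add: algebra_simps)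
    have e4: "4 * S4 P Q G = S4 P Q (\<lambda>p q p' q'. (?h (x p) - ?h (x p')) * (?h (y q) - ?h (y q')) *
        (?m (x p + y q') * ?m (x p' + y q) - ?m (x p + y q) * ?m (x p' + y q')))"
    proof -
      have "4 * S4 P Q G = S4 P Q G + S4 P Q (\<lambda>p q p' q'. G p' q p q') + S4 P Q (\<lambda>p q p' q'. G p q' p' q)
          + S4 P Q (\<lambda>p q p' q'. G p' q' p q)"
        using S4_swp[of P Q G] S4_swq[of P Q G] S4_swq[of P Q "\<lambda>p q p' q'. G p' q p q'"] by simp
      also have "\<dots> = S4 P Q (\<lambda>p q p' q'. G p q p' q' + G p' q p q' + G p q' p' q + G p' q' p q)"
        by (simp only: S4_add)
      also have "\<dots> = S4 P Q (\<lambda>p q p' q'. (?h (x p) - ?h (x p')) * (?h (y q) - ?h (y q')) *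
        (?m (x p + y q') * ?m (x p' + y q) - ?m (x p + y q) * ?m (x p' + y q')))"
        unfolding G_def by (rule arg_cong[where f="S4 P Q"]) (simp add: fun_eq_iff algebra_simps)
      finally show ?thesis .
    qed
    have "0 \<le> S4 P Q G"
      using e4 S4_nonneg[of "\<lambda>p q p' q'. (?h (x p) - ?h (x p')) * (?h (y q) - ?h (y q')) *
        (?m (x p + y q') * ?m (x p' + y q) - ?m (x p + y q) * ?m (x p' + y q'))" P Q]
        pointwise[OF ab] by (simp add: add.commute)
    then show ?thesis using e1 e2 e3 by linarith
  qed
  show ?thesis
    unfolding L2 R1 R2
    using mult_right_mono[OF L1 L2nn] main by linarith
qed

lemma numeric:
  fixes P :: "'p set" and Q :: "'q set" and x :: "'p \<Rightarrow> nat" and y :: "'q \<Rightarrow> nat"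
  assumes ab: "a \<le> b"
  shows "(\<Sum>p\<in>P. \<Sum>q\<in>Q. ff a (x p) * ff (a - x p) (y q)) * (\<Sum>p\<in>P. \<Sum>q\<in>Q. ff b (x p) * ff (b - x p) (y q))
        \<le> (\<Sum>p\<in>P. \<Sum>q\<in>Q. ff a (x p) * ff (b - x p) (y q)) * (\<Sum>p\<in>P. \<Sum>q\<in>Q. ff a (y q) * ff (b - y q) (x p))"
proof -
  have "real ((\<Sum>p\<in>P. \<Sum>q\<in>Q. ff a (x p) * ff (a - x p) (y q)) * (\<Sum>p\<in>P. \<Sum>q\<in>Q. ff b (x p) * ff (b - x p) (y q)))
        \<le> real ((\<Sum>p\<in>P. \<Sum>q\<in>Q. ff a (x p) * ff (b - x p) (y q)) * (\<Sum>p\<in>P. \<Sum>q\<in>Q. ff a (y q) * ff (b - y q) (x p)))"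
    using numeric_real[OF ab, where P=P and Q=Q and x=x and y=y] by (simp only: of_nat_mult of_nat_sum)
  then show ?thesis by (simp only: of_nat_le_iff)
qed


definition V1 :: "nat \<Rightarrow> (nat \<Rightarrow> nat) \<Rightarrow> (nat \<times> nat) set" where
  "V1 k r = {v \<in> kp_vertices k r. fst v = 0}"
definition V2 :: "nat \<Rightarrow> (nat \<Rightarrow> nat) \<Rightarrow> (nat \<times> nat) set" where
  "V2 k r = {v \<in> kp_vertices k r. fst v \<noteq> 0}"

definition eqrel :: "'a set \<Rightarrow> ('a \<times> 'a) set \<Rightarrow> bool" where
  "eqrel X R \<longleftrightarrow> R \<subseteq> X \<times> X \<and> (\<forall>v\<in>X. (v, v) \<in> R) \<and> (\<forall>v w. (v, w) \<in> R \<longrightarrow> (w, v) \<in> R)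
     \<and> (\<forall>u v w. (u, v) \<in> R \<longrightarrow> (v, w) \<in> R \<longrightarrow> (u, w) \<in> R)"

definition rep :: "('a \<times> 'a) set \<Rightarrow> 'a \<Rightarrow> 'a" where
  "rep R v = (SOME w. (v, w) \<in> R)"

definition PP :: "nat \<Rightarrow> (nat \<Rightarrow> nat) \<Rightarrow> ((nat \<times> nat) \<times> (nat \<times> nat)) set set" where
  "PP k r = {R. eqrel (V1 k r) R}"
definition QQ :: "nat \<Rightarrow> (nat \<Rightarrow> nat) \<Rightarrow> ((nat \<times> nat) \<times> (nat \<times> nat)) set set" where
  "QQ k r = {R. eqrel (V2 k r) R \<and> (\<forall>v w. (v, w) \<in> R \<longrightarrow> fst v = fst w)}"

definition kerOn :: "'a set \<Rightarrow> ('a \<Rightarrow> 'b) \<Rightarrow> ('a \<times> 'a) set" where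
  "kerOn X f = {(v, w). v \<in> X \<and> w \<in> X \<and> f v = f w}"

definition InjSet :: "'c set \<Rightarrow> 'c set \<Rightarrow> 'a set \<Rightarrow> 'a set \<Rightarrow> ('a \<Rightarrow> 'c) set" where
  "InjSet S T X Y = {\<phi> \<in> (X \<union> Y) \<rightarrow>\<^sub>E (S \<union> T). inj_on \<phi> (X \<union> Y) \<and> \<phi> ` X \<subseteq> S \<and> \<phi> ` Y \<subseteq> T}"

lemma rep_in_R: "eqrel X R \<Longrightarrow> v \<in> X \<Longrightarrow> (v, rep R v) \<in> R"
  unfolding rep_def eqrel_def by (rule someI[of _ v]) blast

lemma rep_in_X: "eqrel X R \<Longrightarrow> v \<in> X \<Longrightarrow> rep R v \<in> X"
  using rep_in_R[of X R v] unfolding eqrel_def by blast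

lemma rep_eq_iff:
  assumes "eqrel X R" "v \<in> X" "w \<in> X"
  shows "rep R v = rep R w \<longleftrightarrow> (v, w) \<in> R"
proof
  assume "rep R v = rep R w"
  then show "(v, w) \<in> R" using rep_in_R[OF assms(1,2)] rep_in_R[OF assms(1,3)] assms(1)
    unfolding eqrel_def by metis
next
  assume vw: "(v, w) \<in> R"
  have "(\<lambda>u. (v, u) \<in> R) = (\<lambda>u. (w, u) \<in> R)"
    using vw assms(1) unfolding eqrel_def by metis
  then show "rep R v = rep R w" unfolding rep_def by simp
qed

lemma rep_rep: "eqrel X R \<Longrightarrow> v \<in> X \<Longrightarrow> rep R (rep R v) = rep R v"
  using rep_eq_iff[of X R "rep R v" v] rep_in_R[of X R v] rep_in_X[of X R v]
  unfolding eqrel_def by blast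

lemma kp_vertices_Sigma: "kp_vertices k r = Sigma {..<k} (\<lambda>i. {..<r i})"
  unfolding kp_vertices_def by auto

lemma finite_kp_vertices: "finite (kp_vertices k r)"
  unfolding kp_vertices_Sigma by auto

lemma V12: "kp_vertices k r = V1 k r \<union> V2 k r" "V1 k r \<inter> V2 k r = {}"
  unfolding V1_def V2_def by auto

definition mkf :: "nat \<Rightarrow> (nat \<Rightarrow> nat) \<Rightarrow> _ \<Rightarrow> _ \<Rightarrow> ((nat \<times> nat) \<Rightarrow> 'c) \<Rightarrow> (nat \<times> nat) \<Rightarrow> 'c" where
  "mkf k r R1 R2 \<phi> = (\<lambda>v. if v \<in> V1 k r then \<phi> (rep R1 v) else if v \<in> V2 k r then \<phi> (rep R2 v) else undefined)"

lemma UC: "2 \<le> (k::nat) \<Longrightarrow> (\<Union>i<k. (if i = 0 then S else T)) = S \<union> T"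
proof -
  assume k: "2 \<le> k"
  have "0 \<in> {..<k}" "1 \<in> {..<k}" using k by auto
  then show ?thesis by (auto split: if_splits)
qed

lemma ker_in:
  assumes "f \<in> kp_colourings k r C"
  shows "kerOn (V1 k r) f \<in> PP k r" "kerOn (V2 k r) f \<in> QQ k r"
proof -
  show "kerOn (V1 k r) f \<in> PP k r"
    unfolding PP_def eqrel_def kerOn_def by auto
  have pr: "\<And>v w. v \<in> kp_vertices k r \<Longrightarrow> w \<in> kp_vertices k r \<Longrightarrow> fst v \<noteq> fst w \<Longrightarrow> f v \<noteq> f w"
    using assms unfolding kp_colourings_def by blast
  have "fst v = fst w" if "(v, w) \<in> kerOn (V2 k r) f" for v w
  proof -
    have "v \<in> kp_vertices k r" "w \<in> kp_vertices k r" "f v = f w"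
      using that by (auto simp: kerOn_def V2_def)
    then show ?thesis using pr by blast
  qed
  moreover have "eqrel (V2 k r) (kerOn (V2 k r) f)"
    unfolding eqrel_def kerOn_def by auto
  ultimately show "kerOn (V2 k r) f \<in> QQ k r"
    unfolding QQ_def by blast
qed

lemma fib_inv:
  assumes R1: "R1 \<in> PP k r" and R2: "R2 \<in> QQ k r"
    and f: "f \<in> kp_colourings k r C" and k1: "kerOn (V1 k r) f = R1" and k2: "kerOn (V2 k r) f = R2"
  shows "mkf k r R1 R2 (restrict f (rep R1 ` V1 k r \<union> rep R2 ` V2 k r)) = f"
proof
  fix v
  have e1: "eqrel (V1 k r) R1" using R1 by (simp add: PP_def)
  have e2: "eqrel (V2 k r) R2" using R2 by (simp add: QQ_def)
  have fe: "f \<in> kp_vertices k r \<rightarrow>\<^sub>E (\<Union>i<k. C i)" using f unfolding kp_colourings_def by blast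
  show "mkf k r R1 R2 (restrict f (rep R1 ` V1 k r \<union> rep R2 ` V2 k r)) v = f v"
  proof (cases "v \<in> V1 k r")
    case True
    have "(v, rep R1 v) \<in> kerOn (V1 k r) f" using rep_in_R[OF e1 True] k1 by simp
    then have "f (rep R1 v) = f v" by (simp add: kerOn_def)
    then show ?thesis using True by (simp add: mkf_def)
  next
    case False
    show ?thesis
    proof (cases "v \<in> V2 k r")
      case True
      have "(v, rep R2 v) \<in> kerOn (V2 k r) f" using rep_in_R[OF e2 True] k2 by simp
      then have "f (rep R2 v) = f v" by (simp add: kerOn_def)
      then show ?thesis using True False by (simp add: mkf_def)
    next
      case False2: False
      then have "v \<notin> kp_vertices k r" using False V12(1)[of k r] by blast
      then have "f v = undefined" using fe by (rule PiE_arb[rotated])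
      then show ?thesis using False False2 by (simp add: mkf_def)
    qed
  qed
qed

lemma fib_to:
  assumes R1: "R1 \<in> PP k r" and R2: "R2 \<in> QQ k r" and k: "2 \<le> k"
    and f: "f \<in> kp_colourings k r (\<lambda>i. if i = 0 then S else T)" and k1: "kerOn (V1 k r) f = R1" and k2: "kerOn (V2 k r) f = R2"
  shows "restrict f (rep R1 ` V1 k r \<union> rep R2 ` V2 k r) \<in> InjSet S T (rep R1 ` V1 k r) (rep R2 ` V2 k r)"
proof -
  have e1: "eqrel (V1 k r) R1" using R1 by (simp add: PP_def)
  have e2: "eqrel (V2 k r) R2" using R2 by (simp add: QQ_def)
  have f': "f \<in> kp_vertices k r \<rightarrow>\<^sub>E (\<Union>i<k. (if i = 0 then S else T))"
    "\<forall>v\<in>kp_vertices k r. f v \<in> (if fst v = 0 then S else T)"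
    using f unfolding kp_colourings_def by blast+
  have fe: "f \<in> kp_vertices k r \<rightarrow>\<^sub>E S \<union> T" using f'(1) UC[OF k, of S T] by simp
  have fC: "\<And>v. v \<in> kp_vertices k r \<Longrightarrow> f v \<in> (if fst v = 0 then S else T)"
    using f'(2) by blast
  have pr: "\<And>v w. v \<in> kp_vertices k r \<Longrightarrow> w \<in> kp_vertices k r \<Longrightarrow> fst v \<noteq> fst w \<Longrightarrow> f v \<noteq> f w"
    using f unfolding kp_colourings_def by blast
  have X1: "rep R1 ` V1 k r \<subseteq> V1 k r" using rep_in_X[OF e1] by blast
  have Y2: "rep R2 ` V2 k r \<subseteq> V2 k r" using rep_in_X[OF e2] by blast
  have sub: "rep R1 ` V1 k r \<union> rep R2 ` V2 k r \<subseteq> kp_vertices k r" using X1 Y2 V12(1)[of k r] by blast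
  have inj: "inj_on f (rep R1 ` V1 k r \<union> rep R2 ` V2 k r)"
  proof (rule inj_onI)
    fix u u'
    assume u: "u \<in> rep R1 ` V1 k r \<union> rep R2 ` V2 k r" and u': "u' \<in> rep R1 ` V1 k r \<union> rep R2 ` V2 k r"
      and eq: "f u = f u'"
    show "u = u'"
    proof (cases "u \<in> rep R1 ` V1 k r")
      case True
      then obtain v where v: "v \<in> V1 k r" "u = rep R1 v" by blast
      show ?thesis
      proof (cases "u' \<in> rep R1 ` V1 k r")
        case True
        then obtain v' where v': "v' \<in> V1 k r" "u' = rep R1 v'" by blast
        have uu: "u \<in> V1 k r" "u' \<in> V1 k r" using X1 True \<open>u \<in> rep R1 ` V1 k r\<close> by blast+
        have "(u, u') \<in> kerOn (V1 k r) f" unfolding kerOn_def using uu eq by blast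
        then have "(u, u') \<in> R1" using k1 by simp
        then have "rep R1 u = rep R1 u'"
          using rep_eq_iff[OF e1] X1 True \<open>u \<in> rep R1 ` V1 k r\<close> by blast
        then show ?thesis using v v' rep_rep[OF e1] by simp
      next
        case False
        then have "u' \<in> V2 k r" using u' Y2 by blast
        moreover have "u \<in> V1 k r" using True X1 by blast
        ultimately show ?thesis using pr[of u u'] eq unfolding V1_def V2_def by fastforce
      qed
    next
      case False
      then have uV2: "u \<in> V2 k r" using u Y2 by blast
      then obtain v where v: "v \<in> V2 k r" "u = rep R2 v" using u False by blast
      show ?thesis
      proof (cases "u' \<in> rep R1 ` V1 k r")
        case True
        then have "u' \<in> V1 k r" using X1 by blast
        then show ?thesis using pr[of u u'] eq uV2 unfolding V1_def V2_def by (metis (mono_tags, lifting) mem_Collect_eq)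
      next
        case False
        then obtain v' where v': "v' \<in> V2 k r" "u' = rep R2 v'" using u' by blast
        have u'V2: "u' \<in> V2 k r" using v' rep_in_X[OF e2] by blast
        have "(u, u') \<in> kerOn (V2 k r) f" unfolding kerOn_def using uV2 u'V2 eq by blast
        then have "(u, u') \<in> R2" using k2 by simp
        then have "rep R2 u = rep R2 u'" using rep_eq_iff[OF e2 uV2 u'V2] by blast
        then show ?thesis using v v' rep_rep[OF e2] by simp
      qed
    qed
  qed
  show ?thesis
    unfolding InjSet_def
  proof (intro CollectI conjI)
    show "restrict f (rep R1 ` V1 k r \<union> rep R2 ` V2 k r) \<in> rep R1 ` V1 k r \<union> rep R2 ` V2 k r \<rightarrow>\<^sub>E S \<union> T"
      using fe sub by (auto simp: PiE_iff)
    show "inj_on (restrict f (rep R1 ` V1 k r \<union> rep R2 ` V2 k r)) (rep R1 ` V1 k r \<union> rep R2 ` V2 k r)"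
      using inj by (simp only: inj_on_restrict_eq)
    show "restrict f (rep R1 ` V1 k r \<union> rep R2 ` V2 k r) ` rep R1 ` V1 k r \<subseteq> S"
    proof
      fix c assume "c \<in> restrict f (rep R1 ` V1 k r \<union> rep R2 ` V2 k r) ` rep R1 ` V1 k r"
      then obtain u where u: "u \<in> rep R1 ` V1 k r" "c = f u" by auto
      then have "u \<in> V1 k r" using X1 by blast
      then show "c \<in> S" using fC[of u] u by (simp add: V1_def)
    qed
    show "restrict f (rep R1 ` V1 k r \<union> rep R2 ` V2 k r) ` rep R2 ` V2 k r \<subseteq> T"
    proof
      fix c assume "c \<in> restrict f (rep R1 ` V1 k r \<union> rep R2 ` V2 k r) ` rep R2 ` V2 k r"
      then obtain u where u: "u \<in> rep R2 ` V2 k r" "c = f u" by auto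
      then have "u \<in> V2 k r" using Y2 by blast
      then show "c \<in> T" using fC[of u] u by (simp add: V2_def)
    qed
  qed
qed

lemma mkf_V1: "v \<in> V1 k r \<Longrightarrow> mkf k r R1 R2 \<phi> v = \<phi> (rep R1 v)"
  by (simp add: mkf_def)

lemma mkf_V2: "v \<in> V2 k r \<Longrightarrow> mkf k r R1 R2 \<phi> v = \<phi> (rep R2 v)"
  using V12(2)[of k r] by (auto simp: mkf_def)

lemma inj_inv:
  assumes R1: "R1 \<in> PP k r" and R2: "R2 \<in> QQ k r"
    and phi: "\<phi> \<in> InjSet S T (rep R1 ` V1 k r) (rep R2 ` V2 k r)"
  shows "restrict (mkf k r R1 R2 \<phi>) (rep R1 ` V1 k r \<union> rep R2 ` V2 k r) = \<phi>"
proof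
  fix u
  have e1: "eqrel (V1 k r) R1" using R1 by (simp add: PP_def)
  have e2: "eqrel (V2 k r) R2" using R2 by (simp add: QQ_def)
  have pe: "\<phi> \<in> (rep R1 ` V1 k r \<union> rep R2 ` V2 k r) \<rightarrow>\<^sub>E (S \<union> T)"
    using phi by (simp add: InjSet_def)
  show "restrict (mkf k r R1 R2 \<phi>) (rep R1 ` V1 k r \<union> rep R2 ` V2 k r) u = \<phi> u"
  proof (cases "u \<in> rep R1 ` V1 k r")
    case True
    then obtain v where v: "v \<in> V1 k r" "u = rep R1 v" by blast
    have uV: "u \<in> V1 k r" using v rep_in_X[OF e1] by blast
    have "mkf k r R1 R2 \<phi> u = \<phi> (rep R1 u)" by (rule mkf_V1[OF uV])
    then have "mkf k r R1 R2 \<phi> u = \<phi> u" using v rep_rep[OF e1 v(1)] by simp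
    then show ?thesis using True by simp
  next
    case False
    show ?thesis
    proof (cases "u \<in> rep R2 ` V2 k r")
      case True
      then obtain v where v: "v \<in> V2 k r" "u = rep R2 v" by blast
      have uV: "u \<in> V2 k r" using v rep_in_X[OF e2] by blast
      have "mkf k r R1 R2 \<phi> u = \<phi> (rep R2 u)" by (rule mkf_V2[OF uV])
      then have "mkf k r R1 R2 \<phi> u = \<phi> u" using v rep_rep[OF e2 v(1)] by simp
      then show ?thesis using True by simp
    next
      case False2: False
      then show ?thesis using False PiE_arb[OF pe, of u] by simp
    qed
  qed
qed

lemma inj_to:
  assumes R1: "R1 \<in> PP k r" and R2: "R2 \<in> QQ k r" and k: "2 \<le> k"
    and phi: "\<phi> \<in> InjSet S T (rep R1 ` V1 k r) (rep R2 ` V2 k r)"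
  shows "mkf k r R1 R2 \<phi> \<in> kp_colourings k r (\<lambda>i. if i = 0 then S else T)"
    "kerOn (V1 k r) (mkf k r R1 R2 \<phi>) = R1" "kerOn (V2 k r) (mkf k r R1 R2 \<phi>) = R2"
proof -
  let ?g = "mkf k r R1 R2 \<phi>"
  let ?X = "rep R1 ` V1 k r" and ?Y = "rep R2 ` V2 k r"
  have e1: "eqrel (V1 k r) R1" using R1 by (simp add: PP_def)
  have e2: "eqrel (V2 k r) R2" and R2f: "\<And>v w. (v, w) \<in> R2 \<Longrightarrow> fst v = fst w"
    using R2 unfolding QQ_def by blast+
  have pe: "\<phi> \<in> (?X \<union> ?Y) \<rightarrow>\<^sub>E (S \<union> T)" and inj: "inj_on \<phi> (?X \<union> ?Y)"
    and pX: "\<phi> ` ?X \<subseteq> S" and pY: "\<phi> ` ?Y \<subseteq> T"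
    using phi unfolding InjSet_def by blast+
  have X1: "?X \<subseteq> V1 k r" using rep_in_X[OF e1] by blast
  have Y2: "?Y \<subseteq> V2 k r" using rep_in_X[OF e2] by blast
  have gV1: "?g v \<in> S" if v: "v \<in> V1 k r" for v
  proof -
    have "rep R1 v \<in> ?X" using v by blast
    then have "\<phi> (rep R1 v) \<in> S" using pX by blast
    moreover have "?g v = \<phi> (rep R1 v)" by (rule mkf_V1[OF v])
    ultimately show ?thesis by simp
  qed
  have gV2: "?g v \<in> T" if v: "v \<in> V2 k r" for v
  proof -
    have "rep R2 v \<in> ?Y" using v by blast
    then have "\<phi> (rep R2 v) \<in> T" using pY by blast
    moreover have "?g v = \<phi> (rep R2 v)" by (rule mkf_V2[OF v])
    ultimately show ?thesis by simp
  qed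
  have fst1: "v \<in> V1 k r \<Longrightarrow> fst v = 0" for v by (simp add: V1_def)
  have fst2: "v \<in> V2 k r \<Longrightarrow> fst v \<noteq> 0" for v by (simp add: V2_def)
  have V: "v \<in> kp_vertices k r \<longleftrightarrow> v \<in> V1 k r \<or> v \<in> V2 k r" for v using V12(1)[of k r] by blast
  have pi: "?g \<in> kp_vertices k r \<rightarrow>\<^sub>E S \<union> T"
  proof (rule PiE_I)
    fix v assume "v \<in> kp_vertices k r"
    then show "?g v \<in> S \<union> T" using V gV1 gV2 by blast
  next
    fix v assume "v \<notin> kp_vertices k r"
    then show "?g v = undefined" using V by (simp add: mkf_def)
  qed
  have col: "\<forall>v\<in>kp_vertices k r. ?g v \<in> (if fst v = 0 then S else T)"
  proof
    fix v assume v: "v \<in> kp_vertices k r"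
    show "?g v \<in> (if fst v = 0 then S else T)"
    proof (cases "v \<in> V1 k r")
      case True
      then show ?thesis using gV1 fst1 by simp
    next
      case False
      then have "v \<in> V2 k r" using v V by blast
      then show ?thesis using gV2[of v] fst2[of v] by simp
    qed
  qed
  have diff12: "?g v \<noteq> ?g w" if "v \<in> V1 k r" "w \<in> V2 k r" for v w
  proof -
    have a: "rep R1 v \<in> ?X" "rep R2 w \<in> ?Y" using that by blast+
    have m1: "fst (rep R1 v) = 0" using rep_in_X[OF e1 that(1)] by (simp add: V1_def)
    have m2: "fst (rep R2 w) \<noteq> 0" using rep_in_X[OF e2 that(2)] by (simp add: V2_def)
    have "rep R1 v \<noteq> rep R2 w" using m1 m2 by auto
    then have "\<phi> (rep R1 v) \<noteq> \<phi> (rep R2 w)" using inj a by (meson UnCI inj_on_contraD)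
    moreover have "?g v = \<phi> (rep R1 v)" by (rule mkf_V1[OF that(1)])
    moreover have "?g w = \<phi> (rep R2 w)" by (rule mkf_V2[OF that(2)])
    ultimately show ?thesis by simp
  qed
  have diff22: "?g v \<noteq> ?g w" if "v \<in> V2 k r" "w \<in> V2 k r" "fst v \<noteq> fst w" for v w
  proof -
    have a: "rep R2 v \<in> ?Y" "rep R2 w \<in> ?Y" using that by blast+
    have "(v, w) \<notin> R2" using R2f that(3) by blast
    then have "rep R2 v \<noteq> rep R2 w" using rep_eq_iff[OF e2 that(1,2)] by blast
    then have "\<phi> (rep R2 v) \<noteq> \<phi> (rep R2 w)" using inj a by (meson UnCI inj_on_contraD)
    moreover have "?g v = \<phi> (rep R2 v)" by (rule mkf_V2[OF that(1)])
    moreover have "?g w = \<phi> (rep R2 w)" by (rule mkf_V2[OF that(2)])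
    ultimately show ?thesis by simp
  qed
  have proper: "\<forall>v\<in>kp_vertices k r. \<forall>w\<in>kp_vertices k r. fst v \<noteq> fst w \<longrightarrow> ?g v \<noteq> ?g w"
  proof (intro ballI impI)
    fix v w assume v: "v \<in> kp_vertices k r" and w: "w \<in> kp_vertices k r" and ne: "fst v \<noteq> fst w"
    show "?g v \<noteq> ?g w"
    proof (cases "v \<in> V1 k r")
      case True
      then have fv: "fst v = 0" using fst1 by blast
      have "w \<notin> V1 k r"
      proof
        assume "w \<in> V1 k r"
        then have "fst w = 0" using fst1 by blast
        then show False using fv ne by simp
      qed
      then have w2: "w \<in> V2 k r" using w V by blast
      show ?thesis using diff12[OF True w2] .
    next
      case False
      then have v2: "v \<in> V2 k r" using v V by blast
      show ?thesis
      proof (cases "w \<in> V1 k r")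
        case True
        have "?g w \<noteq> ?g v" using diff12[OF True v2] .
        then show ?thesis by auto
      next
        case False
        then have w2: "w \<in> V2 k r" using w V by blast
        show ?thesis using diff22[OF v2 w2 ne] .
      qed
    qed
  qed
  show "?g \<in> kp_colourings k r (\<lambda>i. if i = 0 then S else T)"
    unfolding kp_colourings_def using pi col proper UC[OF k, of S T] by simp
  show "kerOn (V1 k r) ?g = R1"
  proof (intro set_eqI iffI)
    fix z assume "z \<in> kerOn (V1 k r) ?g"
    then obtain v w where z: "z = (v, w)" "v \<in> V1 k r" "w \<in> V1 k r" "?g v = ?g w"
      by (auto simp: kerOn_def)
    moreover have "?g v = \<phi> (rep R1 v)" by (rule mkf_V1[OF z(2)])
    moreover have "?g w = \<phi> (rep R1 w)" by (rule mkf_V1[OF z(3)])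
    ultimately have "\<phi> (rep R1 v) = \<phi> (rep R1 w)" by simp
    moreover have "rep R1 v \<in> ?X \<union> ?Y" "rep R1 w \<in> ?X \<union> ?Y" using z by blast+
    ultimately have "rep R1 v = rep R1 w" using inj by (meson inj_onD)
    then show "z \<in> R1" using rep_eq_iff[OF e1 z(2,3)] z(1) by blast
  next
    fix z assume zR: "z \<in> R1"
    then obtain v w where z: "z = (v, w)" "v \<in> V1 k r" "w \<in> V1 k r"
      using e1 unfolding eqrel_def by blast
    then have "rep R1 v = rep R1 w" using rep_eq_iff[OF e1 z(2,3)] zR by blast
    moreover have "?g v = \<phi> (rep R1 v)" by (rule mkf_V1[OF z(2)])
    moreover have "?g w = \<phi> (rep R1 w)" by (rule mkf_V1[OF z(3)])
    ultimately have "?g v = ?g w" by simp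
    then show "z \<in> kerOn (V1 k r) ?g" using z by (simp add: kerOn_def)
  qed
  show "kerOn (V2 k r) ?g = R2"
  proof (intro set_eqI iffI)
    fix z assume "z \<in> kerOn (V2 k r) ?g"
    then obtain v w where z: "z = (v, w)" "v \<in> V2 k r" "w \<in> V2 k r" "?g v = ?g w"
      by (auto simp: kerOn_def)
    moreover have "?g v = \<phi> (rep R2 v)" by (rule mkf_V2[OF z(2)])
    moreover have "?g w = \<phi> (rep R2 w)" by (rule mkf_V2[OF z(3)])
    ultimately have "\<phi> (rep R2 v) = \<phi> (rep R2 w)" by simp
    moreover have "rep R2 v \<in> ?X \<union> ?Y" "rep R2 w \<in> ?X \<union> ?Y" using z by blast+
    ultimately have "rep R2 v = rep R2 w" using inj by (meson inj_onD)
    then show "z \<in> R2" using rep_eq_iff[OF e2 z(2,3)] z(1) by blast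
  next
    fix z assume zR: "z \<in> R2"
    then obtain v w where z: "z = (v, w)" "v \<in> V2 k r" "w \<in> V2 k r"
      using e2 unfolding eqrel_def by blast
    then have "rep R2 v = rep R2 w" using rep_eq_iff[OF e2 z(2,3)] zR by blast
    moreover have "?g v = \<phi> (rep R2 v)" by (rule mkf_V2[OF z(2)])
    moreover have "?g w = \<phi> (rep R2 w)" by (rule mkf_V2[OF z(3)])
    ultimately have "?g v = ?g w" by simp
    then show "z \<in> kerOn (V2 k r) ?g" using z by (simp add: kerOn_def)
  qed
qed


definition merge :: "'a set \<Rightarrow> ('a \<Rightarrow> 'c) \<Rightarrow> ('a \<Rightarrow> 'c) \<Rightarrow> 'a \<Rightarrow> 'c" where
  "merge X \<phi>1 \<phi>2 = (\<lambda>v. if v \<in> X then \<phi>1 v else \<phi>2 v)"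

lemma card_inj_funcs: "finite X \<Longrightarrow> finite S \<Longrightarrow> card {\<phi> \<in> X \<rightarrow>\<^sub>E S. inj_on \<phi> X} = ff (card S) (card X)"
  using card_inj_on_subset_funcset[of X S X] by (simp add: ff_def)

lemma card_InjSet_le:
  assumes fX: "finite X" and fY: "finite Y" and XY: "X \<inter> Y = {}" and fT: "finite T" and ST: "S \<subseteq> T"
  shows "card {\<phi> \<in> (X \<union> Y) \<rightarrow>\<^sub>E T. inj_on \<phi> (X \<union> Y) \<and> \<phi> ` X \<subseteq> S} = ff (card S) (card X) * ff (card T - card X) (card Y)"
proof -
  let ?Z = "{\<phi> \<in> (X \<union> Y) \<rightarrow>\<^sub>E T. inj_on \<phi> (X \<union> Y) \<and> \<phi> ` X \<subseteq> S}"
  let ?I1 = "{\<phi>1 \<in> X \<rightarrow>\<^sub>E S. inj_on \<phi>1 X}"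
  let ?B = "\<lambda>\<phi>1. {\<phi>2 \<in> Y \<rightarrow>\<^sub>E (T - \<phi>1 ` X). inj_on \<phi>2 Y}"
  let ?Sig = "Sigma ?I1 ?B"
  have fS: "finite S" using fT ST finite_subset by blast
  have bij: "bij_betw (\<lambda>\<phi>. (restrict \<phi> X, restrict \<phi> Y)) ?Z ?Sig"
  proof (rule bij_betw_byWitness[where f'="\<lambda>(\<phi>1, \<phi>2). merge X \<phi>1 \<phi>2"])
    show "\<forall>\<phi>\<in>?Z. (\<lambda>(\<phi>1, \<phi>2). merge X \<phi>1 \<phi>2) (restrict \<phi> X, restrict \<phi> Y) = \<phi>"
    proof
      fix \<phi> assume p: "\<phi> \<in> ?Z"
      then have pe: "\<phi> \<in> (X \<union> Y) \<rightarrow>\<^sub>E T" by blast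
      show "(\<lambda>(\<phi>1, \<phi>2). merge X \<phi>1 \<phi>2) (restrict \<phi> X, restrict \<phi> Y) = \<phi>"
      proof
        fix v
        show "(\<lambda>(\<phi>1, \<phi>2). merge X \<phi>1 \<phi>2) (restrict \<phi> X, restrict \<phi> Y) v = \<phi> v"
          using PiE_arb[OF pe, of v] by (simp add: merge_def)
      qed
    qed
    show "\<forall>z\<in>?Sig. (restrict ((\<lambda>(\<phi>1, \<phi>2). merge X \<phi>1 \<phi>2) z) X, restrict ((\<lambda>(\<phi>1, \<phi>2). merge X \<phi>1 \<phi>2) z) Y) = z"
    proof
      fix z assume z: "z \<in> ?Sig"
      then obtain \<phi>1 \<phi>2 where zz: "z = (\<phi>1, \<phi>2)" "\<phi>1 \<in> X \<rightarrow>\<^sub>E S" "\<phi>2 \<in> Y \<rightarrow>\<^sub>E (T - \<phi>1 ` X)"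
        by blast
      have 1: "restrict (merge X \<phi>1 \<phi>2) X = \<phi>1"
      proof
        fix v show "restrict (merge X \<phi>1 \<phi>2) X v = \<phi>1 v"
          using PiE_arb[OF zz(2), of v] by (simp add: merge_def)
      qed
      have 2: "restrict (merge X \<phi>1 \<phi>2) Y = \<phi>2"
      proof
        fix v show "restrict (merge X \<phi>1 \<phi>2) Y v = \<phi>2 v"
          using PiE_arb[OF zz(3), of v] XY by (auto simp: merge_def)
      qed
      show "(restrict ((\<lambda>(\<phi>1, \<phi>2). merge X \<phi>1 \<phi>2) z) X, restrict ((\<lambda>(\<phi>1, \<phi>2). merge X \<phi>1 \<phi>2) z) Y) = z"
        using 1 2 zz(1) by simp
    qed
    show "(\<lambda>\<phi>. (restrict \<phi> X, restrict \<phi> Y)) ` ?Z \<subseteq> ?Sig"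
    proof
      fix z assume "z \<in> (\<lambda>\<phi>. (restrict \<phi> X, restrict \<phi> Y)) ` ?Z"
      then obtain \<phi> where p: "\<phi> \<in> ?Z" and z: "z = (restrict \<phi> X, restrict \<phi> Y)" by blast
      have pe: "\<phi> \<in> (X \<union> Y) \<rightarrow>\<^sub>E T" and inj: "inj_on \<phi> (X \<union> Y)" and pS: "\<phi> ` X \<subseteq> S"
        using p by blast+
      have a: "restrict \<phi> X \<in> ?I1"
      proof (intro CollectI conjI)
        show "restrict \<phi> X \<in> X \<rightarrow>\<^sub>E S" using pS by auto
        show "inj_on (restrict \<phi> X) X" using inj by (simp add: inj_on_Un)
      qed
      have b: "restrict \<phi> Y \<in> ?B (restrict \<phi> X)"
      proof (intro CollectI conjI)
        have "\<phi> v \<in> T - restrict \<phi> X ` X" if v: "v \<in> Y" for v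
        proof -
          have "\<phi> v \<in> T" using pe v by auto
          moreover have "\<phi> v \<notin> \<phi> ` X"
          proof
            assume "\<phi> v \<in> \<phi> ` X"
            then obtain u where u: "u \<in> X" "\<phi> v = \<phi> u" by blast
            then have "v = u" using inj v by (meson UnI1 UnI2 inj_onD)
            then show False using u(1) v XY by blast
          qed
          moreover have "restrict \<phi> X ` X = \<phi> ` X" by auto
          ultimately show ?thesis by simp
        qed
        then show "restrict \<phi> Y \<in> Y \<rightarrow>\<^sub>E T - restrict \<phi> X ` X" by auto
        show "inj_on (restrict \<phi> Y) Y" using inj by (simp add: inj_on_Un)
      qed
      show "z \<in> ?Sig" using a b z by blast
    qed
    show "(\<lambda>(\<phi>1, \<phi>2). merge X \<phi>1 \<phi>2) ` ?Sig \<subseteq> ?Z"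
    proof
      fix \<psi> assume "\<psi> \<in> (\<lambda>(\<phi>1, \<phi>2). merge X \<phi>1 \<phi>2) ` ?Sig"
      then obtain z where z: "z \<in> ?Sig" "\<psi> = (\<lambda>(\<phi>1, \<phi>2). merge X \<phi>1 \<phi>2) z" by blast
      obtain \<phi>1 \<phi>2 where zz: "z = (\<phi>1, \<phi>2)" by (cases z)
      have ps: "\<psi> = merge X \<phi>1 \<phi>2" using z(2) zz by simp
      have p1: "\<phi>1 \<in> X \<rightarrow>\<^sub>E S" "inj_on \<phi>1 X" using z(1) zz by simp_all
      have p2: "\<phi>2 \<in> Y \<rightarrow>\<^sub>E (T - \<phi>1 ` X)" "inj_on \<phi>2 Y" using z(1) zz by simp_all
      have m1: "\<psi> v = \<phi>1 v" if "v \<in> X" for v using that ps by (simp add: merge_def)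
      have m2: "\<psi> v = \<phi>2 v" if "v \<notin> X" for v using that ps by (simp add: merge_def)
      have pi: "\<psi> \<in> (X \<union> Y) \<rightarrow>\<^sub>E T"
      proof (rule PiE_I)
        fix v assume v: "v \<in> X \<union> Y"
        show "\<psi> v \<in> T"
        proof (cases "v \<in> X")
          case True
          then show ?thesis using m1 PiE_mem[OF p1(1) True] ST by auto
        next
          case False
          then have "v \<in> Y" using v by blast
          then show ?thesis using m2[OF False] PiE_mem[OF p2(1)] by auto
        qed
      next
        fix v assume v: "v \<notin> X \<union> Y"
        then show "\<psi> v = undefined" using m2 PiE_arb[OF p2(1)] by simp
      qed
      have inj: "inj_on \<psi> (X \<union> Y)"
      proof (rule inj_onI)
        fix u v assume u: "u \<in> X \<union> Y" and v: "v \<in> X \<union> Y" and e: "\<psi> u = \<psi> v"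
        have c1: "\<phi>2 w \<notin> \<phi>1 ` X" if "w \<in> Y" for w using PiE_mem[OF p2(1) that] by blast
        show "u = v"
        proof (cases "u \<in> X")
          case uX: True
          show ?thesis
          proof (cases "v \<in> X")
            case True
            then show ?thesis using uX e m1 p1(2) by (metis inj_onD)
          next
            case False
            then have "v \<in> Y" using v by blast
            then have "\<psi> v \<notin> \<phi>1 ` X" using c1 m2[OF False] by simp
            moreover have "\<psi> u \<in> \<phi>1 ` X" using m1[OF uX] uX by simp
            ultimately show ?thesis using e by simp
          qed
        next
          case uX: False
          then have uY: "u \<in> Y" using u by blast
          show ?thesis
          proof (cases "v \<in> X")
            case True
            have "\<psi> u \<notin> \<phi>1 ` X" using c1[OF uY] m2[OF uX] by simp
            moreover have "\<psi> v \<in> \<phi>1 ` X" using m1[OF True] True by simp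
            ultimately show ?thesis using e by simp
          next
            case False
            then have "v \<in> Y" using v by blast
            then show ?thesis using uY e m2[OF uX] m2[OF False] p2(2) by (metis inj_onD)
          qed
        qed
      qed
      have img: "\<psi> ` X \<subseteq> S" using m1 PiE_mem[OF p1(1)] by auto
      show "\<psi> \<in> ?Z" using pi inj img by blast
    qed
  qed
  have "card ?Z = card ?Sig" using bij by (rule bij_betw_same_card)
  also have "\<dots> = (\<Sum>\<phi>1\<in>?I1. card (?B \<phi>1))"
  proof (rule card_SigmaI)
    show "finite ?I1" using fX fS by (auto intro: finite_subset[OF _ finite_PiE[OF fX]])
    show "\<forall>a\<in>?I1. finite (?B a)"
      using fY fT by (auto intro: finite_subset[OF _ finite_PiE[OF fY]])
  qed
  also have "\<dots> = (\<Sum>\<phi>1\<in>?I1. ff (card T - card X) (card Y))"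
  proof (rule sum.cong[OF refl])
    fix \<phi>1 assume p1: "\<phi>1 \<in> ?I1"
    then have sub: "\<phi>1 ` X \<subseteq> T" using ST by auto
    have "card (\<phi>1 ` X) = card X" using p1 by (simp add: card_image)
    then have "card (T - \<phi>1 ` X) = card T - card X"
      using card_Diff_subset[OF finite_imageI[OF fX] sub] by simp
    then show "card (?B \<phi>1) = ff (card T - card X) (card Y)"
      using card_inj_funcs[OF fY, of "T - \<phi>1 ` X"] fT by simp
  qed
  also have "\<dots> = ff (card S) (card X) * ff (card T - card X) (card Y)"
    using card_inj_funcs[OF fX fS] by simp
  finally show ?thesis .
qed

lemma fib_card:
  assumes R1: "R1 \<in> PP k r" and R2: "R2 \<in> QQ k r" and k: "2 \<le> k"
  shows "card {f \<in> kp_colourings k r (\<lambda>i. if i = 0 then S else T). kerOn (V1 k r) f = R1 \<and> kerOn (V2 k r) f = R2}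
    = card (InjSet S T (rep R1 ` V1 k r) (rep R2 ` V2 k r))"
proof -
  let ?A = "{f \<in> kp_colourings k r (\<lambda>i. if i = 0 then S else T). kerOn (V1 k r) f = R1 \<and> kerOn (V2 k r) f = R2}"
  let ?Z = "rep R1 ` V1 k r \<union> rep R2 ` V2 k r"
  have "bij_betw (\<lambda>f. restrict f ?Z) ?A (InjSet S T (rep R1 ` V1 k r) (rep R2 ` V2 k r))"
  proof (rule bij_betw_byWitness[where f'="mkf k r R1 R2"])
    show "\<forall>f\<in>?A. mkf k r R1 R2 (restrict f ?Z) = f"
    proof
      fix f assume "f \<in> ?A"
      then show "mkf k r R1 R2 (restrict f ?Z) = f" using fib_inv[OF R1 R2] by blast
    qed
    show "\<forall>\<phi>\<in>InjSet S T (rep R1 ` V1 k r) (rep R2 ` V2 k r). restrict (mkf k r R1 R2 \<phi>) ?Z = \<phi>"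
      using inj_inv[OF R1 R2] by blast
    show "(\<lambda>f. restrict f ?Z) ` ?A \<subseteq> InjSet S T (rep R1 ` V1 k r) (rep R2 ` V2 k r)"
    proof
      fix \<phi> assume "\<phi> \<in> (\<lambda>f. restrict f ?Z) ` ?A"
      then obtain f where f: "f \<in> ?A" "\<phi> = restrict f ?Z" by blast
      then show "\<phi> \<in> InjSet S T (rep R1 ` V1 k r) (rep R2 ` V2 k r)" using fib_to[OF R1 R2 k] by blast
    qed
    show "mkf k r R1 R2 ` InjSet S T (rep R1 ` V1 k r) (rep R2 ` V2 k r) \<subseteq> ?A"
    proof
      fix f assume "f \<in> mkf k r R1 R2 ` InjSet S T (rep R1 ` V1 k r) (rep R2 ` V2 k r)"
      then obtain \<phi> where p: "\<phi> \<in> InjSet S T (rep R1 ` V1 k r) (rep R2 ` V2 k r)" "f = mkf k r R1 R2 \<phi>" by blast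
      show "f \<in> ?A" using inj_to[OF R1 R2 k p(1)] p(2) by blast
    qed
  qed
  then show ?thesis by (rule bij_betw_same_card)
qed

lemma count_general:
  assumes k: "2 \<le> k" and fS: "finite S" and fT: "finite T"
  shows "card (kp_colourings k r (\<lambda>i. if i = 0 then S else T)) =
    (\<Sum>R1\<in>PP k r. \<Sum>R2\<in>QQ k r. card (InjSet S T (rep R1 ` V1 k r) (rep R2 ` V2 k r)))"
proof -
  let ?C = "kp_colourings k r (\<lambda>i. if i = 0 then S else T)"
  let ?F = "\<lambda>z. {f \<in> ?C. kerOn (V1 k r) f = fst z \<and> kerOn (V2 k r) f = snd z}"
  have finC: "finite ?C"
  proof (rule finite_subset)
    show "?C \<subseteq> kp_vertices k r \<rightarrow>\<^sub>E (\<Union>i<k. (if i = 0 then S else T))"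
      unfolding kp_colourings_def by blast
    show "finite (kp_vertices k r \<rightarrow>\<^sub>E (\<Union>i<k. (if i = 0 then S else T)))"
      using fS fT by (intro finite_PiE finite_kp_vertices) (auto)
  qed
  have fV1: "finite (V1 k r)" and fV2: "finite (V2 k r)"
    using finite_kp_vertices[of k r] by (auto simp: V1_def V2_def)
  have finPP: "finite (PP k r)"
    by (rule finite_subset[of _ "Pow (V1 k r \<times> V1 k r)"]) (use fV1 in \<open>auto simp: PP_def eqrel_def\<close>)
  have finQQ: "finite (QQ k r)"
    by (rule finite_subset[of _ "Pow (V2 k r \<times> V2 k r)"]) (use fV2 in \<open>auto simp: QQ_def eqrel_def\<close>)
  have U: "?C = (\<Union>z\<in>PP k r \<times> QQ k r. ?F z)"
  proof
    show "?C \<subseteq> (\<Union>z\<in>PP k r \<times> QQ k r. ?F z)"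
    proof
      fix f assume f: "f \<in> ?C"
      then have "(kerOn (V1 k r) f, kerOn (V2 k r) f) \<in> PP k r \<times> QQ k r" using ker_in[OF f] by blast
      moreover have "f \<in> ?F (kerOn (V1 k r) f, kerOn (V2 k r) f)" using f by simp
      ultimately show "f \<in> (\<Union>z\<in>PP k r \<times> QQ k r. ?F z)" by blast
    qed
    show "(\<Union>z\<in>PP k r \<times> QQ k r. ?F z) \<subseteq> ?C"
    proof
      fix f assume "f \<in> (\<Union>z\<in>PP k r \<times> QQ k r. ?F z)"
      then obtain z where "f \<in> ?F z" by blast
      then show "f \<in> ?C" by simp
    qed
  qed
  have "card ?C = card (\<Union>z\<in>PP k r \<times> QQ k r. ?F z)" using U by (rule arg_cong)
  also have "\<dots> = (\<Sum>z\<in>PP k r \<times> QQ k r. card (?F z))"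
  proof (rule card_UN_disjoint)
    show "finite (PP k r \<times> QQ k r)" using finPP finQQ by simp
    show "\<forall>z\<in>PP k r \<times> QQ k r. finite (?F z)" using finC by simp
    show "\<forall>z\<in>PP k r \<times> QQ k r. \<forall>z'\<in>PP k r \<times> QQ k r. z \<noteq> z' \<longrightarrow> ?F z \<inter> ?F z' = {}"
    proof (intro ballI impI)
      fix z z' assume "z \<in> PP k r \<times> QQ k r" "z' \<in> PP k r \<times> QQ k r" "z \<noteq> z'"
      then have "fst z \<noteq> fst z' \<or> snd z \<noteq> snd z'" by (auto simp: prod_eq_iff)
      then show "?F z \<inter> ?F z' = {}" by blast
    qed
  qed
  also have "\<dots> = (\<Sum>R1\<in>PP k r. \<Sum>R2\<in>QQ k r. card (?F (R1, R2)))"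
    unfolding sum.cartesian_product by (rule sum.cong) auto
  also have "\<dots> = (\<Sum>R1\<in>PP k r. \<Sum>R2\<in>QQ k r. card (InjSet S T (rep R1 ` V1 k r) (rep R2 ` V2 k r)))"
  proof (intro sum.cong refl)
    fix R1 R2 assume "R1 \<in> PP k r" "R2 \<in> QQ k r"
    then show "card (?F (R1, R2)) = card (InjSet S T (rep R1 ` V1 k r) (rep R2 ` V2 k r))"
      using fib_card[OF _ _ k] by simp
  qed
  finally show ?thesis .
qed

lemma XY_facts:
  assumes "R1 \<in> PP k r" "R2 \<in> QQ k r"
  shows "finite (rep R1 ` V1 k r)" "finite (rep R2 ` V2 k r)" "rep R1 ` V1 k r \<inter> rep R2 ` V2 k r = {}"
proof -
  have fV1: "finite (V1 k r)" and fV2: "finite (V2 k r)"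
    using finite_kp_vertices[of k r] by (auto simp: V1_def V2_def)
  then show "finite (rep R1 ` V1 k r)" "finite (rep R2 ` V2 k r)" by auto
  have e1: "eqrel (V1 k r) R1" using assms(1) by (simp add: PP_def)
  have e2: "eqrel (V2 k r) R2" using assms(2) unfolding QQ_def by blast
  have "rep R1 ` V1 k r \<subseteq> V1 k r" "rep R2 ` V2 k r \<subseteq> V2 k r"
    using rep_in_X[OF e1] rep_in_X[OF e2] by blast+
  then show "rep R1 ` V1 k r \<inter> rep R2 ` V2 k r = {}" using V12(2)[of k r] by blast
qed

lemma count_le:
  assumes k: "2 \<le> k" and fT: "finite T" and ST: "S \<subseteq> T"
  shows "card (kp_colourings k r (\<lambda>i. if i = 0 then S else T)) =
    (\<Sum>R1\<in>PP k r. \<Sum>R2\<in>QQ k r. ff (card S) (card (rep R1 ` V1 k r)) * ff (card T - card (rep R1 ` V1 k r)) (card (rep R2 ` V2 k r)))"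
proof -
  have fS: "finite S" using fT ST finite_subset by blast
  show ?thesis
    unfolding count_general[OF k fS fT]
  proof (intro sum.cong refl)
    fix R1 R2 assume R: "R1 \<in> PP k r" "R2 \<in> QQ k r"
    have "InjSet S T (rep R1 ` V1 k r) (rep R2 ` V2 k r) =
      {\<phi> \<in> (rep R1 ` V1 k r \<union> rep R2 ` V2 k r) \<rightarrow>\<^sub>E T. inj_on \<phi> (rep R1 ` V1 k r \<union> rep R2 ` V2 k r) \<and> \<phi> ` rep R1 ` V1 k r \<subseteq> S}"
      proof -
      have ST': "S \<union> T = T" using ST by blast
      have "\<phi> ` rep R2 ` V2 k r \<subseteq> T" if "\<phi> \<in> (rep R1 ` V1 k r \<union> rep R2 ` V2 k r) \<rightarrow>\<^sub>E T" for \<phi>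
        using that by blast
      then show ?thesis unfolding InjSet_def ST' by blast
    qed
    then show "card (InjSet S T (rep R1 ` V1 k r) (rep R2 ` V2 k r)) =
      ff (card S) (card (rep R1 ` V1 k r)) * ff (card T - card (rep R1 ` V1 k r)) (card (rep R2 ` V2 k r))"
      using card_InjSet_le[OF XY_facts[OF R] fT ST] by simp
  qed
qed

lemma count_ge:
  assumes k: "2 \<le> k" and fS: "finite S" and TS: "T \<subseteq> S"
  shows "card (kp_colourings k r (\<lambda>i. if i = 0 then S else T)) =
    (\<Sum>R1\<in>PP k r. \<Sum>R2\<in>QQ k r. ff (card T) (card (rep R2 ` V2 k r)) * ff (card S - card (rep R2 ` V2 k r)) (card (rep R1 ` V1 k r)))"
proof -
  have fT: "finite T" using fS TS finite_subset by blast
  show ?thesis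
    unfolding count_general[OF k fS fT]
  proof (intro sum.cong refl)
    fix R1 R2 assume R: "R1 \<in> PP k r" "R2 \<in> QQ k r"
    have d: "rep R2 ` V2 k r \<inter> rep R1 ` V1 k r = {}" using XY_facts(3)[OF R] by blast
    have "InjSet S T (rep R1 ` V1 k r) (rep R2 ` V2 k r) =
      {\<phi> \<in> (rep R2 ` V2 k r \<union> rep R1 ` V1 k r) \<rightarrow>\<^sub>E S. inj_on \<phi> (rep R2 ` V2 k r \<union> rep R1 ` V1 k r) \<and> \<phi> ` rep R2 ` V2 k r \<subseteq> T}"
      proof -
      have TS': "S \<union> T = S" using TS by blast
      have U: "rep R1 ` V1 k r \<union> rep R2 ` V2 k r = rep R2 ` V2 k r \<union> rep R1 ` V1 k r" by blast
      have "\<phi> ` rep R1 ` V1 k r \<subseteq> S" if "\<phi> \<in> (rep R1 ` V1 k r \<union> rep R2 ` V2 k r) \<rightarrow>\<^sub>E S" for \<phi>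
        using that by blast
      then show ?thesis unfolding InjSet_def TS' U by blast
    qed
    then show "card (InjSet S T (rep R1 ` V1 k r) (rep R2 ` V2 k r)) =
      ff (card T) (card (rep R2 ` V2 k r)) * ff (card S - card (rep R2 ` V2 k r)) (card (rep R1 ` V1 k r))"
      using card_InjSet_le[OF XY_facts(2,1)[OF R] d fS TS] by simp
  qed
qed


theorem lemma6p4:
  fixes k a b :: nat and r :: "nat \<Rightarrow> nat" and A B :: "'c set"
  assumes "k \<ge> 2"
    and "\<forall>i<k. r i > 0"
    and "0 < a" and "a \<le> b"
    and "A \<subseteq> B" and "finite B" and "card A = a" and "card B = b"
  shows "N_k k r a * N_k k r b \<le> N1_k k r A B * N1_k k r B A"
proof -
  have k: "2 \<le> k" using assms(1) by simp
  have fe: "\<And>c::nat. (\<lambda>_::nat. {0..<c}) = (\<lambda>i. if i = 0 then {0..<c} else {0..<c})" by simp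
  have Na: "N_k k r a = (\<Sum>R1\<in>PP k r. \<Sum>R2\<in>QQ k r. ff a (card (rep R1 ` V1 k r)) * ff (a - card (rep R1 ` V1 k r)) (card (rep R2 ` V2 k r)))"
    unfolding N_k_def fe[of a] using count_le[OF k finite_atLeastLessThan[of 0 a] subset_refl, of r] by simp
  have Nb: "N_k k r b = (\<Sum>R1\<in>PP k r. \<Sum>R2\<in>QQ k r. ff b (card (rep R1 ` V1 k r)) * ff (b - card (rep R1 ` V1 k r)) (card (rep R2 ` V2 k r)))"
    unfolding N_k_def fe[of b] using count_le[OF k finite_atLeastLessThan[of 0 b] subset_refl, of r] by simp
  have NAB: "N1_k k r A B = (\<Sum>R1\<in>PP k r. \<Sum>R2\<in>QQ k r. ff a (card (rep R1 ` V1 k r)) * ff (b - card (rep R1 ` V1 k r)) (card (rep R2 ` V2 k r)))"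
    unfolding N1_k_def using count_le[OF k assms(6) assms(5), of r] assms(7,8) by simp
  have NBA: "N1_k k r B A = (\<Sum>R1\<in>PP k r. \<Sum>R2\<in>QQ k r. ff a (card (rep R2 ` V2 k r)) * ff (b - card (rep R2 ` V2 k r)) (card (rep R1 ` V1 k r)))"
    unfolding N1_k_def using count_ge[OF k assms(6) assms(5), of r] assms(7,8) by simp
  show ?thesis
    unfolding Na Nb NAB NBA
    by (rule numeric[OF assms(4)])
qed

end
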